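(* Define $\alpha_n(q)$ (written $a_n(q^2)$ in the original) recursively by $\alpha_0(q)=0$ and $\alpha_n(q) = q^n +(1-q^{2n-2})\alpha_{n-1}(q)$ for $n\in\mathbb{N}$. Then for $q\in\mathbb{C}$ with $0<|q|<1$, \[ q^{-1}\lim_{n\to \infty} \alpha_n(q) = \frac{\left(q^2;q^2\right)_\infty}{\left(q;q^2\right)_\infty} = \sum_{n\geq 0} q^{\frac{n(n+1)}{2}} . \]
   Context: For $n\in\mathbb{N}_0\cup\{\infty\}$, $(a;q)_n := \prod_{j=0}^{n-1}(1-aq^j)$. *)

theory Defs
  imports "HOL-Analysis.Analysis"
begin

definition qpoch :: "complex \<Rightarrow> complex \<Rightarrow> nat \<Rightarrow> complex" where
  "qpoch a q n = (\<Prod>j<n. 1 - a * q ^ j)"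

definition qpoch_inf :: "complex \<Rightarrow> complex \<Rightarrow> complex" where
  "qpoch_inf a q = (\<Prod>j. 1 - a * q ^ j)"

fun alpha :: "complex \<Rightarrow> nat \<Rightarrow> complex" where
  "alpha q 0 = 0"
| "alpha q (Suc n) = q ^ Suc n + (1 - q ^ (2 * n)) * alpha q n"

end

theory Submission
  imports Defs
begin

lemma qpoch_Suc: "qpoch a p (Suc n) = qpoch a p n * (1 - a * p ^ n)"
  by (simp add: qpoch_def)

lemma exp_le_one_minus:
  fixes x r :: real
  assumes "0 \<le> x" "x \<le> r" "r < 1"
  shows "exp (- (x / (1 - r))) \<le> 1 - x"
proof -
  define t where "t = x / (1 - r)"
  have t0: "t \<ge> 0" using assms by (simp add: t_def)
  have "exp (- t) = 1 / exp t" by (simp add: exp_minus field_simps)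
  also have "\<dots> \<le> 1 / (1 + t)"
    using t0 by (intro divide_left_mono) (auto simp: add_pos_nonneg)
  also have "1 / (1 + t) = (1 - r) / (1 - r + x)"
    using assms by (simp add: t_def field_simps)
  also have "\<dots> \<le> 1 - x"
  proof -
    have "(1 - r) \<le> (1 - x) * (1 - r + x)"
    proof -
      have "(1 - x) * (1 - r + x) - (1 - r) = x * (r - x)" by (simp add: algebra_simps)
      moreover have "x * (r - x) \<ge> 0" using assms by simp
      ultimately show ?thesis by linarith
    qed
    then show ?thesis using assms by (simp add: divide_le_eq)
  qed
  finally show ?thesis by (simp add: t_def)
qed

lemma geom_partial_le:
  fixes r :: real
  assumes "0 \<le> r" "r < 1"
  shows "(\<Sum>j<n. r ^ Suc j) \<le> r / (1 - r)"
proof -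
  have "(\<Sum>j<n. r ^ Suc j) = r * (\<Sum>j<n. r ^ j)" by (simp add: sum_distrib_left)
  also have "\<dots> = r * ((1 - r ^ n) / (1 - r))" using assms by (simp add: sum_gp_strict)
  also have "\<dots> \<le> r * (1 / (1 - r))"
    using assms by (intro mult_left_mono divide_right_mono) auto
  finally show ?thesis by simp
qed

lemma qpoch_lower:
  assumes "norm a \<le> r" "norm p \<le> r" "r < 1"
  shows "exp (- (r / (1 - r) ^ 2)) \<le> norm (qpoch a p n)"
proof -
  have r0: "0 \<le> r" using assms(1) norm_ge_zero order_trans by blast
  have nb: "norm (a * p ^ j) \<le> r ^ Suc j" for j
  proof -
    have "norm (a * p ^ j) = norm a * norm p ^ j" by (simp add: norm_mult norm_power)
    also have "\<dots> \<le> r * r ^ j" using assms r0 by (intro mult_mono power_mono) auto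
    finally show ?thesis by simp
  qed
  have rj: "r ^ Suc j \<le> r" for j using r0 assms(3)
    by (metis less_eq_real_def power_Suc_le_self)
  have "exp (- (r / (1 - r) ^ 2)) \<le> exp (- ((\<Sum>j<n. r ^ Suc j) / (1 - r)))"
  proof -
    have "(\<Sum>j<n. r ^ Suc j) / (1 - r) \<le> (r / (1 - r)) / (1 - r)"
      using assms r0 geom_partial_le by (intro divide_right_mono) auto
    then show ?thesis by (simp add: power2_eq_square)
  qed
  also have "\<dots> = (\<Prod>j<n. exp (- (r ^ Suc j / (1 - r))))"
    by (simp add: exp_sum[symmetric] sum_negf sum_divide_distrib)
  also have "\<dots> \<le> (\<Prod>j<n. 1 - r ^ Suc j)"
    by (intro prod_mono conjI exp_le_one_minus) (use r0 rj assms in auto)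
  also have "\<dots> \<le> (\<Prod>j<n. norm (1 - a * p ^ j))"
  proof (intro prod_mono conjI)
    fix j
    show "0 \<le> 1 - r ^ Suc j" using rj assms by (meson diff_ge_0_iff_ge less_eq_real_def order_trans)
    have "1 - norm (a * p ^ j) \<le> norm (1 - a * p ^ j)"
      by (metis norm_one norm_triangle_ineq2)
    then show "1 - r ^ Suc j \<le> norm (1 - a * p ^ j)" using nb[of j] by linarith
  qed
  also have "\<dots> = norm (qpoch a p n)" by (simp add: qpoch_def prod_norm)
  finally show ?thesis .
qed

lemma qpoch_upper:
  assumes "norm a \<le> r" "norm p \<le> r" "r < 1"
  shows "norm (qpoch a p n) \<le> exp (r / (1 - r))"
proof -
  have r0: "0 \<le> r" using assms(1) norm_ge_zero order_trans by blast
  have nb: "norm (a * p ^ j) \<le> r ^ Suc j" for j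
  proof -
    have "norm (a * p ^ j) = norm a * norm p ^ j" by (simp add: norm_mult norm_power)
    also have "\<dots> \<le> r * r ^ j" using assms r0 by (intro mult_mono power_mono) auto
    finally show ?thesis by simp
  qed
  have "norm (qpoch a p n) = (\<Prod>j<n. norm (1 - a * p ^ j))" by (simp add: qpoch_def prod_norm)
  also have "\<dots> \<le> (\<Prod>j<n. exp (r ^ Suc j))"
  proof (intro prod_mono conjI)
    fix j
    have "norm (1 - a * p ^ j) \<le> 1 + norm (a * p ^ j)"
      by (metis norm_one norm_triangle_ineq4)
    also have "\<dots> \<le> 1 + r ^ Suc j" using nb[of j] by simp
    also have "\<dots> \<le> exp (r ^ Suc j)" by simp
    finally show "norm (1 - a * p ^ j) \<le> exp (r ^ Suc j)" .
  qed simp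
  also have "\<dots> = exp (\<Sum>j<n. r ^ Suc j)" by (simp add: exp_sum)
  also have "\<dots> \<le> exp (r / (1 - r))" using geom_partial_le[OF r0 assms(3)] by simp
  finally show ?thesis .
qed

lemma qpoch_tendsto:
  assumes "norm a < 1" "norm p < 1"
  shows "(\<lambda>n. qpoch a p n) \<longlonglongrightarrow> qpoch_inf a p"
proof -
  have s: "summable (\<lambda>k. norm (- (a * p ^ k)))"
  proof -
    have "summable (\<lambda>k. norm a * norm p ^ k)"
      using assms by (intro summable_mult summable_geometric) auto
    then show ?thesis by (simp add: norm_mult norm_power)
  qed
  have ne: "- (a * p ^ k) \<noteq> -1" for k
  proof
    assume "- (a * p ^ k) = -1"
    then have "norm (a * p ^ k) = 1" by (metis norm_minus_cancel norm_one)
    moreover have "norm (a * p ^ k) < 1"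
    proof -
      have "norm (a * p ^ k) = norm a * norm p ^ k" by (simp add: norm_mult norm_power)
      also have "\<dots> \<le> norm a * 1" using assms by (intro mult_left_mono power_le_one) auto
      finally show ?thesis using assms by simp
    qed
    ultimately show False by simp
  qed
  have cp: "convergent_prod (\<lambda>k. 1 - a * p ^ k)"
    using summable_imp_convergent_prod_complex[OF s ne] by simp
  have "(\<lambda>n. \<Prod>i\<le>n. 1 - a * p ^ i) \<longlonglongrightarrow> qpoch_inf a p"
    using convergent_prod_LIMSEQ[OF cp] by (simp add: qpoch_inf_def)
  then show ?thesis unfolding qpoch_def
    using LIMSEQ_lessThan_iff_atMost[of "\<lambda>A. \<Prod>i\<in>A. 1 - a * p ^ i"] by simp
qed

lemma qpoch_inf_lower:
  assumes "norm a \<le> r" "norm p \<le> r" "r < 1"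
  shows "exp (- (r / (1 - r) ^ 2)) \<le> norm (qpoch_inf a p)"
proof -
  have "(\<lambda>n. norm (qpoch a p n)) \<longlonglongrightarrow> norm (qpoch_inf a p)"
    using assms by (intro tendsto_norm qpoch_tendsto) auto
  then show ?thesis
    by (rule tendsto_lowerbound) (use qpoch_lower[OF assms] in auto)
qed

lemma qpoch_inf_nz:
  assumes "norm a < 1" "norm p < 1"
  shows "qpoch_inf a p \<noteq> 0"
proof -
  have "exp (- (max (norm a) (norm p) / (1 - max (norm a) (norm p)) ^ 2)) \<le> norm (qpoch_inf a p)"
    using assms by (intro qpoch_inf_lower) auto
  moreover have "exp (- (max (norm a) (norm p) / (1 - max (norm a) (norm p)) ^ 2)) > 0" by simp
  ultimately show ?thesis by auto
qed

lemma qpoch_nz: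
  assumes "norm a < 1" "norm p < 1"
  shows "qpoch a p n \<noteq> 0"
proof -
  have "exp (- (max (norm a) (norm p) / (1 - max (norm a) (norm p)) ^ 2)) \<le> norm (qpoch a p n)"
    using assms by (intro qpoch_lower) auto
  moreover have "exp (- (max (norm a) (norm p) / (1 - max (norm a) (norm p)) ^ 2)) > 0" by simp
  ultimately show ?thesis by auto
qed

definition eul :: "complex \<Rightarrow> complex \<Rightarrow> complex" where
  "eul p w = (\<Sum>k. w ^ k / qpoch p p k)"

definition cp0 :: "complex \<Rightarrow> real" where
  "cp0 p = exp (- (norm p / (1 - norm p) ^ 2))"

lemma cp0_pos: "cp0 p > 0" by (simp add: cp0_def)

lemma cp0_le: "norm p < 1 \<Longrightarrow> cp0 p \<le> norm (qpoch p p k)"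
  unfolding cp0_def by (rule qpoch_lower) auto

lemma eul_term_bound:
  assumes "norm p < 1"
  shows "norm (w ^ k / qpoch p p k) \<le> norm w ^ k / cp0 p"
proof -
  have "norm (w ^ k / qpoch p p k) = norm w ^ k / norm (qpoch p p k)"
    by (simp add: norm_divide norm_power)
  also have "\<dots> \<le> norm w ^ k / cp0 p"
  proof -
    have a: "0 < cp0 p" by (rule cp0_pos)
    have b: "cp0 p \<le> norm (qpoch p p k)" by (rule cp0_le[OF assms])
    have "0 < norm (qpoch p p k)" using a b by linarith
    then have "0 < norm (qpoch p p k) * cp0 p" using a by simp
    then show ?thesis using a b by (intro divide_left_mono) auto
  qed
  finally show ?thesis .
qed

lemma eul_summable:
  assumes "norm p < 1" "norm w < 1"
  shows "summable (\<lambda>k. norm (w ^ k / qpoch p p k))"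
proof (rule summable_comparison_test)
  show "\<exists>N. \<forall>n\<ge>N. norm (norm (w ^ n / qpoch p p n)) \<le> norm w ^ n / cp0 p"
    using eul_term_bound[OF assms(1)] by auto
  show "summable (\<lambda>n. norm w ^ n / cp0 p)"
    using assms by (intro summable_divide summable_geometric) auto
qed

lemma eul_sums:
  assumes "norm p < 1" "norm w < 1"
  shows "(\<lambda>k. w ^ k / qpoch p p k) sums eul p w"
  unfolding eul_def using summable_norm_cancel[OF eul_summable[OF assms]]
  by (simp add: summable_sums)

lemma eul_fe:
  assumes "norm p < 1" "norm w < 1"
  shows "eul p w * (1 - w) = eul p (p * w)"
proof -
  have pw: "norm (p * w) < 1"
    using assms by (simp add: norm_mult) (metis mult_le_one norm_ge_zero less_eq_real_def mult_strict_mono' mult_1_right)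
  have d: "(\<lambda>k. w ^ k / qpoch p p k - (p * w) ^ k / qpoch p p k) sums (eul p w - eul p (p * w))"
    by (intro sums_diff eul_sums assms pw)
  have eq: "w ^ Suc k / qpoch p p (Suc k) - (p * w) ^ Suc k / qpoch p p (Suc k) = w * (w ^ k / qpoch p p k)" for k
  proof -
    have nz: "qpoch p p k \<noteq> 0" "1 - p * p ^ k \<noteq> 0"
      using qpoch_nz[OF assms(1) assms(1)] qpoch_nz[OF assms(1) assms(1), of "Suc k"]
      by (auto simp: qpoch_Suc)
    have "w ^ Suc k / qpoch p p (Suc k) - (p * w) ^ Suc k / qpoch p p (Suc k)
        = (w ^ Suc k * (1 - p * p ^ k)) / (qpoch p p k * (1 - p * p ^ k))"
      by (simp add: qpoch_Suc power_mult_distrib diff_divide_distrib[symmetric] algebra_simps)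
    also have "\<dots> = w ^ Suc k / qpoch p p k" using nz by simp
    finally show ?thesis by simp
  qed
  have d': "(\<lambda>k. w ^ Suc k / qpoch p p (Suc k) - (p * w) ^ Suc k / qpoch p p (Suc k)) sums (eul p w - eul p (p * w))"
    using d by (subst sums_Suc_iff) (simp add: qpoch_def)
  have "(\<lambda>k. w * (w ^ k / qpoch p p k)) sums (eul p w - eul p (p * w))"
    using d' by (simp only: eq)
  moreover have "(\<lambda>k. w * (w ^ k / qpoch p p k)) sums (w * eul p w)"
    by (intro sums_mult eul_sums assms)
  ultimately have "eul p w - eul p (p * w) = w * eul p w" using sums_unique2 by blast
  then show ?thesis by (simp add: algebra_simps)
qed

lemma norm_pow_mult_le:
  fixes p w :: complex
  assumes "norm p < 1"
  shows "norm (p ^ N * w) \<le> norm w"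
proof -
  have "norm (p ^ N * w) = norm p ^ N * norm w" by (simp add: norm_mult norm_power)
  also have "\<dots> \<le> 1 * norm w" using assms by (intro mult_right_mono power_le_one) auto
  finally show ?thesis by simp
qed

lemma eul_iter:
  assumes "norm p < 1" "norm z < 1"
  shows "eul p z * qpoch z p N = eul p (p ^ N * z)"
proof (induction N)
  case 0
  then show ?case by (simp add: qpoch_def)
next
  case (Suc N)
  have w: "norm (p ^ N * z) < 1" using norm_pow_mult_le[OF assms(1), of N z] assms(2) by linarith
  have "eul p z * qpoch z p (Suc N) = (eul p z * qpoch z p N) * (1 - p ^ N * z)"
    by (simp add: qpoch_Suc algebra_simps)
  also have "\<dots> = eul p (p ^ N * z) * (1 - p ^ N * z)" by (simp only: Suc.IH)
  also have "\<dots> = eul p (p * (p ^ N * z))" by (rule eul_fe[OF assms(1) w])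
  finally show ?case by (simp add: algebra_simps)
qed

lemma eul_near0:
  assumes "norm p < 1" "norm w \<le> R" "R < 1"
  shows "norm (eul p w - 1) \<le> norm w / (cp0 p * (1 - R))"
proof -
  have R0: "0 \<le> R" using assms(2) norm_ge_zero order_trans by blast
  have w1: "norm w < 1" using assms by linarith
  have s: "(\<lambda>k. w ^ Suc k / qpoch p p (Suc k)) sums (eul p w - 1)"
    using eul_sums[OF assms(1) w1] by (subst sums_Suc_iff) (simp add: qpoch_def)
  have bnd: "norm (w ^ Suc k / qpoch p p (Suc k)) \<le> norm w * (R ^ k / cp0 p)" for k
  proof -
    have "norm (w ^ Suc k / qpoch p p (Suc k)) \<le> norm w ^ Suc k / cp0 p"
      by (rule eul_term_bound[OF assms(1)])
    also have "\<dots> = norm w * (norm w ^ k / cp0 p)" by simp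
    also have "\<dots> \<le> norm w * (R ^ k / cp0 p)"
      using assms cp0_pos[of p] by (intro mult_left_mono divide_right_mono power_mono) auto
    finally show ?thesis .
  qed
  have gs: "(\<lambda>k. norm w * (R ^ k / cp0 p)) sums (norm w * ((1 / (1 - R)) / cp0 p))"
    using assms R0 by (intro sums_mult sums_divide geometric_sums) auto
  have "norm (eul p w - 1) \<le> norm w * ((1 / (1 - R)) / cp0 p)"
    using norm_suminf_le[OF bnd sums_summable[OF gs]] sums_unique[OF s] sums_unique[OF gs] by simp
  then show ?thesis by (simp add: mult.commute)
qed

lemma euler_identity:
  assumes "norm p < 1" "norm z < 1"
  shows "eul p z * qpoch_inf z p = 1"
proof -
  have l1: "(\<lambda>N. eul p z * qpoch z p N) \<longlonglongrightarrow> eul p z * qpoch_inf z p"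
    using assms by (intro tendsto_mult tendsto_const qpoch_tendsto)
  have pz: "(\<lambda>N. p ^ N * z) \<longlonglongrightarrow> 0"
    using assms by (intro tendsto_mult_left_zero LIMSEQ_power_zero) auto
  have "(\<lambda>N. eul p (p ^ N * z) - 1) \<longlonglongrightarrow> 0"
  proof (rule Lim_null_comparison)
    show "\<forall>\<^sub>F N in sequentially. norm (eul p (p ^ N * z) - 1) \<le> norm (p ^ N * z) / (cp0 p * (1 - norm z))"
      using eul_near0[OF assms(1) norm_pow_mult_le[OF assms(1)] assms(2)] by auto
    show "(\<lambda>N. norm (p ^ N * z) / (cp0 p * (1 - norm z))) \<longlonglongrightarrow> 0"
      using pz by (intro tendsto_divide_zero tendsto_norm_zero)
  qed
  then have "(\<lambda>N. eul p (p ^ N * z)) \<longlonglongrightarrow> 1"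
    by (simp add: LIM_zero_iff)
  then have "(\<lambda>N. eul p z * qpoch z p N) \<longlonglongrightarrow> 1"
    by (simp add: eul_iter[OF assms])
  with l1 show ?thesis using LIMSEQ_unique by blast
qed

lemma alpha_closed:
  assumes "norm q < 1"
  shows "alpha q (Suc n) = qpoch (q^2) (q^2) n * (\<Sum>k\<le>n. q ^ Suc k / qpoch (q^2) (q^2) k)"
proof (induction n)
  case 0
  then show ?case by (simp add: qpoch_def)
next
  case (Suc n)
  have q2: "norm (q^2) < 1" using assms by (simp add: norm_power power_less_one_iff)
  have nz: "qpoch (q^2) (q^2) (Suc n) \<noteq> 0" by (rule qpoch_nz[OF q2 q2])
  have e: "q ^ (2 * Suc n) = q^2 * (q^2)^n"
    by (simp add: power_mult[symmetric] power_add[symmetric])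
  have "alpha q (Suc (Suc n)) = q ^ Suc (Suc n) + (1 - q^2 * (q^2)^n) * alpha q (Suc n)"
    by (simp only: alpha.simps e)
  also have "\<dots> = q ^ Suc (Suc n) + qpoch (q^2) (q^2) (Suc n) * (\<Sum>k\<le>n. q ^ Suc k / qpoch (q^2) (q^2) k)"
    by (subst Suc.IH) (simp add: qpoch_Suc algebra_simps del: alpha.simps)
  also have "\<dots> = qpoch (q^2) (q^2) (Suc n) * (\<Sum>k\<le>Suc n. q ^ Suc k / qpoch (q^2) (q^2) k)"
    using nz by (simp add: algebra_simps)
  finally show ?case .
qed

lemma alpha_tendsto:
  assumes "norm q < 1"
  shows "alpha q \<longlonglongrightarrow> qpoch_inf (q^2) (q^2) * (q * eul (q^2) q)"
proof -
  have q2: "norm (q^2) < 1" using assms by (simp add: norm_power power_less_one_iff)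
  have s: "(\<lambda>k. q * (q ^ k / qpoch (q^2) (q^2) k)) sums (q * eul (q^2) q)"
    by (intro sums_mult eul_sums q2 assms)
  have "(\<lambda>n. \<Sum>k<n. q ^ Suc k / qpoch (q^2) (q^2) k) \<longlonglongrightarrow> q * eul (q^2) q"
    using s unfolding sums_def by simp
  then have ps: "(\<lambda>n. \<Sum>k\<le>n. q ^ Suc k / qpoch (q^2) (q^2) k) \<longlonglongrightarrow> q * eul (q^2) q"
    using LIMSEQ_lessThan_iff_atMost[of "\<lambda>A. \<Sum>k\<in>A. q ^ Suc k / qpoch (q^2) (q^2) k"] by simp
  have "(\<lambda>n. alpha q (Suc n)) \<longlonglongrightarrow> qpoch_inf (q^2) (q^2) * (q * eul (q^2) q)"
    unfolding alpha_closed[OF assms] by (intro tendsto_mult ps qpoch_tendsto q2)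
  then show ?thesis by (rule LIMSEQ_imp_Suc)
qed


definition qbin :: "complex \<Rightarrow> nat \<Rightarrow> nat \<Rightarrow> complex" where
  "qbin q N k = (if k \<le> N then qpoch q q N / (qpoch q q k * qpoch q q (N - k)) else 0)"

definition tri :: "nat \<Rightarrow> nat" where "tri k = (\<Sum>i<k. i)"

lemma tri_0 [simp]: "tri 0 = 0" by (simp add: tri_def)

lemma qpoch_0 [simp]: "qpoch a p 0 = 1" by (simp add: qpoch_def)

lemma tri_Suc: "tri (Suc k) = tri k + k" by (simp add: tri_def)

lemma tri_2: "2 * tri k + k = k * k"
  by (induction k) (auto simp: tri_Suc)

lemma qbin_0: "norm q < 1 \<Longrightarrow> qbin q N 0 = 1"
  using qpoch_nz[of q q N] by (simp add: qbin_def)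

lemma qbin_gt [simp]: "N < k \<Longrightarrow> qbin q N k = 0"
  by (simp add: qbin_def)

lemma pascal_alg:
  fixes a b c u v :: complex
  assumes "a \<noteq> 0" "b \<noteq> 0" "1 - u \<noteq> 0" "1 - v \<noteq> 0"
  shows "c * (1 - u * v) / (a * (1 - u) * (b * (1 - v))) = c / (a * (1 - u) * b) + v * (c / (a * (b * (1 - v))))"
proof -
  define D where "D = a * (1 - u) * (b * (1 - v))"
  have D: "D \<noteq> 0" using assms by (simp add: D_def)
  have 1: "c / (a * (1 - u) * b) = (c * (1 - v)) / D"
    using assms by (simp add: D_def)
  have 2: "v * (c / (a * (b * (1 - v)))) = (v * c * (1 - u)) / D"
    using assms by (simp add: D_def)
  have "c / (a * (1 - u) * b) + v * (c / (a * (b * (1 - v))))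
      = (c * (1 - v) + v * c * (1 - u)) / D"
    by (simp only: 1 2 add_divide_distrib)
  also have "c * (1 - v) + v * c * (1 - u) = c * (1 - u * v)" by (simp add: algebra_simps)
  finally show ?thesis by (simp add: D_def)
qed

lemma qbin_pascal:
  assumes "norm q < 1" "k \<le> N"
  shows "qbin q (Suc N) (Suc k) = qbin q N (Suc k) + q ^ (N - k) * qbin q N k"
proof (cases "k = N")
  case True
  have nz: "qpoch q q N \<noteq> 0" "qpoch q q (Suc N) \<noteq> 0" by (rule qpoch_nz[OF assms(1) assms(1)])+
  show ?thesis using True nz by (simp add: qbin_def)
next
  case False
  then have kN: "k < N" using assms by simp
  then obtain m where m: "N = Suc (k + m)" by (metis add_Suc_right less_imp_Suc_add)
  have e1: "N - k = Suc m" "Suc N - Suc k = Suc m" "N - Suc k = m" using m by auto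
  define a where "a = qpoch q q k"
  define b where "b = qpoch q q m"
  define c where "c = qpoch q q N"
  have nz: "a \<noteq> 0" "b \<noteq> 0" "c \<noteq> 0" "1 - q * q ^ k \<noteq> 0" "1 - q * q ^ m \<noteq> 0"
    using qpoch_nz[OF assms(1) assms(1), of k] qpoch_nz[OF assms(1) assms(1), of m]
      qpoch_nz[OF assms(1) assms(1), of N]
      qpoch_nz[OF assms(1) assms(1), of "Suc k"] qpoch_nz[OF assms(1) assms(1), of "Suc m"]
    by (auto simp: a_def b_def c_def qpoch_Suc)
  have pN: "q * q ^ N = (q * q ^ k) * (q * q ^ m)" using m by (simp add: power_add[symmetric])
  have pv: "q ^ (N - k) = q * q ^ m" using e1 by simp
  have "qbin q (Suc N) (Suc k) = c * (1 - q * q ^ N) / (a * (1 - q * q ^ k) * (b * (1 - q * q ^ m)))"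
    using kN by (simp add: qbin_def e1 qpoch_Suc a_def b_def c_def)
  moreover have "qbin q N (Suc k) = c / (a * (1 - q * q ^ k) * b)"
    using kN by (simp add: qbin_def e1 qpoch_Suc a_def b_def c_def)
  moreover have "qbin q N k = c / (a * (b * (1 - q * q ^ m)))"
    using kN by (simp add: qbin_def e1 qpoch_Suc a_def b_def c_def)
  ultimately show ?thesis using nz
    by (simp only: pN pv) (rule pascal_alg, auto)
qed

lemma cauchy_qbin:
  assumes "norm q < 1"
  shows "(\<Prod>i<N. y + x * q ^ i) = (\<Sum>k\<le>N. q ^ tri k * qbin q N k * x ^ k * y ^ (N - k))"
proof (induction N)
  case 0
  then show ?case using qbin_0[OF assms] by simp
next
  case (Suc N)
  define f where "f M k = q ^ tri k * qbin q M k * x ^ k * y ^ (M - k)" for M k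
  have IH: "(\<Prod>i<N. y + x * q ^ i) = (\<Sum>k\<le>N. f N k)" using Suc.IH by (simp add: f_def)
  have split: "f (Suc N) (Suc k) = y * f N (Suc k) + x * q ^ N * f N k" if "k \<le> N" for k
  proof -
    have p: "qbin q (Suc N) (Suc k) = qbin q N (Suc k) + q ^ (N - k) * qbin q N k"
      by (rule qbin_pascal[OF assms that])
    have a: "q ^ tri (Suc k) * (q ^ (N - k) * qbin q N k) * x ^ Suc k * y ^ (Suc N - Suc k)
        = x * q ^ N * f N k"
    proof -
      have "tri (Suc k) + (N - k) = tri k + N" using that by (simp add: tri_Suc)
      then have "q ^ tri (Suc k) * q ^ (N - k) = q ^ tri k * q ^ N" by (metis power_add)
      then show ?thesis by (simp add: f_def algebra_simps)
    qed
    have b: "q ^ tri (Suc k) * qbin q N (Suc k) * x ^ Suc k * y ^ (Suc N - Suc k) = y * f N (Suc k)"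
    proof (cases "k = N")
      case True then show ?thesis by (simp add: f_def)
    next
      case False
      then have "Suc N - Suc k = Suc (N - Suc k)" using that by simp
      then show ?thesis by (simp add: f_def algebra_simps)
    qed
    have "f (Suc N) (Suc k) = q ^ tri (Suc k) * qbin q N (Suc k) * x ^ Suc k * y ^ (Suc N - Suc k)
       + q ^ tri (Suc k) * (q ^ (N - k) * qbin q N k) * x ^ Suc k * y ^ (Suc N - Suc k)"
      unfolding f_def[of "Suc N"] p by (simp only: distrib_left distrib_right)
    then show ?thesis by (simp only: a b add.commute)
  qed
  have fz: "f (Suc N) 0 = y * f N 0" using qbin_0[OF assms] by (simp add: f_def)
  have "(\<Sum>k\<le>Suc N. f (Suc N) k) = f (Suc N) 0 + (\<Sum>k\<le>N. f (Suc N) (Suc k))"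
    by (rule sum.atMost_Suc_shift)
  also have "\<dots> = y * f N 0 + (\<Sum>k\<le>N. y * f N (Suc k)) + x * q ^ N * (\<Sum>k\<le>N. f N k)"
    by (simp add: fz split sum.distrib sum_distrib_left)
  also have "y * f N 0 + (\<Sum>k\<le>N. y * f N (Suc k)) = y * (\<Sum>k\<le>Suc N. f N k)"
    by (simp only: sum.atMost_Suc_shift[of "f N" N] sum_distrib_left distrib_left)
  also have "(\<Sum>k\<le>Suc N. f N k) = (\<Sum>k\<le>N. f N k)"
    by (simp add: f_def)
  finally have "(\<Sum>k\<le>Suc N. f (Suc N) k) = (y + x * q ^ N) * (\<Sum>k\<le>N. f N k)"
    by (simp add: algebra_simps)
  then show ?case using IH by (simp add: f_def mult.commute)
qed


lemma exp_i:
  assumes "j \<le> n"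
  shows "tri (n - j) + n * (2*n+1 - (n - j)) = tri n + n + n*n + tri (Suc j)"
proof -
  obtain m where n: "n = j + m" using assms le_Suc_ex by blast
  have e: "n - j = m" "2*n+1 - (n - j) = 2*j+m+1" using n by auto
  show ?thesis unfolding e unfolding n
    using tri_2[of m] tri_2[of "j+m"] tri_2[of "Suc j"]
    by (simp add: algebra_simps tri_Suc)
qed

lemma exp_ii:
  assumes "j \<le> n"
  shows "tri (Suc n + j) + n * (2*n+1 - (Suc n + j)) = tri n + n + n*n + tri (Suc j)"
proof -
  obtain m where n: "n = j + m" using assms le_Suc_ex by blast
  have e: "2*n+1 - (Suc n + j) = m" using n by auto
  show ?thesis unfolding e unfolding n
    using tri_2[of "Suc (j + m) + j"] tri_2[of "j+m"] tri_2[of "Suc j"]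
    by (simp add: algebra_simps tri_Suc)
qed

lemma prod_lessThan_add: "(\<Prod>i<a+b. f i) = (\<Prod>i<a. f i) * (\<Prod>i<b. f (a+i))"
  for f :: "nat \<Rightarrow> 'a::comm_monoid_mult"
  by (induction b) (simp_all add: mult.assoc)

lemma sum_lessThan_add: "(\<Sum>i<a+b. f i) = (\<Sum>i<a. f i) + (\<Sum>i<b. f (a+i))"
  for f :: "nat \<Rightarrow> 'a::comm_monoid_add"
  by (induction b) (simp_all add: add.assoc)

lemma qpoch_negq: "qpoch (-q) q n = (\<Prod>i<n. 1 + q ^ Suc i)"
  by (simp add: qpoch_def)

lemma gauss_finite:
  assumes "norm q < 1" "q \<noteq> 0"
  shows "(\<Sum>j\<le>n. q ^ tri (Suc j) * (qbin q (2*n+1) (n - j) + qbin q (2*n+1) (Suc n + j)))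
         = 2 * qpoch (-q) q n ^ 2"
proof -
  define E where "E = tri n + n + n*n"
  define Pm where "Pm = qpoch (-q) q n"
  define g where "g i = q ^ n + 1 * q ^ i" for i
  have c: "(\<Prod>i<2*n+1. g i) = (\<Sum>k\<le>2*n+1. q ^ tri k * qbin q (2*n+1) k * 1 ^ k * (q ^ n) ^ (2*n+1 - k))"
    unfolding g_def by (rule cauchy_qbin[OF assms(1)])
  have p1: "(\<Prod>i<n. g i) = q ^ tri n * Pm"
  proof -
    have "(\<Prod>i<n. g i) = (\<Prod>i<n. q ^ i * (1 + q ^ Suc (n - Suc i)))"
    proof (rule prod.cong)
      fix i assume "i \<in> {..<n}"
      then have "i + Suc (n - Suc i) = n" by auto
      then have "q ^ i * q ^ Suc (n - Suc i) = q ^ n" by (metis power_add)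
      then show "g i = q ^ i * (1 + q ^ Suc (n - Suc i))" by (simp add: g_def algebra_simps)
    qed simp
    also have "\<dots> = (\<Prod>i<n. q ^ i) * (\<Prod>i<n. 1 + q ^ Suc (n - Suc i))"
      by (rule prod.distrib)
    also have "(\<Prod>i<n. q ^ i) = q ^ tri n" by (simp add: tri_def power_sum)
    also have "(\<Prod>i<n. 1 + q ^ Suc (n - Suc i)) = Pm"
      unfolding Pm_def qpoch_negq
      by (rule prod.nat_diff_reindex[where g = "\<lambda>i. 1 + q ^ Suc i"])
    finally show ?thesis .
  qed
  have p2: "(\<Prod>i<n. g (Suc n + i)) = q ^ (n * n) * Pm"
  proof -
    have "(\<Prod>i<n. g (Suc n + i)) = (\<Prod>i<n. q ^ n * (1 + q ^ Suc i))"
      by (intro prod.cong) (simp_all add: g_def algebra_simps power_add)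
    also have "\<dots> = (\<Prod>i<n. q ^ n) * Pm" unfolding Pm_def qpoch_negq by (rule prod.distrib)
    also have "(\<Prod>i<n. q ^ n) = q ^ (n * n)" by (simp add: power_mult)
    finally show ?thesis .
  qed
  have lhs: "(\<Prod>i<2*n+1. g i) = q ^ E * (2 * Pm ^ 2)"
  proof -
    have "(\<Prod>i<2*n+1. g i) = (\<Prod>i<Suc n + n. g i)"
      by (rule arg_cong[where f="\<lambda>m. \<Prod>i<m. g i"]) simp
    also have "\<dots> = (\<Prod>i<n. g i) * g n * (\<Prod>i<n. g (Suc n + i))"
      by (simp only: prod_lessThan_add prod.lessThan_Suc)
    also have "\<dots> = q ^ tri n * Pm * (2 * q ^ n) * (q ^ (n * n) * Pm)"
      by (simp only: p1 p2) (simp add: g_def)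
    also have "\<dots> = q ^ E * (2 * Pm ^ 2)"
      by (simp add: E_def power_add power2_eq_square algebra_simps)
    finally show ?thesis .
  qed
  define t where "t k = q ^ tri k * qbin q (2*n+1) k * 1 ^ k * (q ^ n) ^ (2*n+1 - k)" for k
  have t1: "t (n - j) = q ^ E * (q ^ tri (Suc j) * qbin q (2*n+1) (n - j))" if "j \<le> n" for j
  proof -
    have "q ^ tri (n - j) * (q ^ n) ^ (2*n+1 - (n - j)) = q ^ E * q ^ tri (Suc j)"
      unfolding power_mult[symmetric] power_add[symmetric] E_def using exp_i[OF that] by simp
    then show ?thesis by (simp add: t_def algebra_simps)
  qed
  have t2: "t (Suc n + j) = q ^ E * (q ^ tri (Suc j) * qbin q (2*n+1) (Suc n + j))" if "j \<le> n" for j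
  proof -
    have "q ^ tri (Suc n + j) * (q ^ n) ^ (2*n+1 - (Suc n + j)) = q ^ E * q ^ tri (Suc j)"
      unfolding power_mult[symmetric] power_add[symmetric] E_def using exp_ii[OF that] by simp
    then show ?thesis by (simp add: t_def algebra_simps)
  qed
  have "(\<Sum>k\<le>2*n+1. t k) = (\<Sum>k<Suc n + Suc n. t k)"
    unfolding lessThan_Suc_atMost[symmetric]
    by (rule arg_cong[where f="\<lambda>m. \<Sum>i<m. t i"]) simp
  also have "\<dots> = (\<Sum>k<Suc n. t k) + (\<Sum>j<Suc n. t (Suc n + j))"
    by (rule sum_lessThan_add)
  also have "(\<Sum>k<Suc n. t k) = (\<Sum>j<Suc n. t (n - j))"
    using sum.nat_diff_reindex[of t "Suc n"] by simp
  also have "(\<Sum>j<Suc n. t (n - j)) + (\<Sum>j<Suc n. t (Suc n + j))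
      = q ^ E * (\<Sum>j\<le>n. q ^ tri (Suc j) * (qbin q (2*n+1) (n - j) + qbin q (2*n+1) (Suc n + j)))"
  proof -
    have "(\<Sum>j<Suc n. t (n - j)) + (\<Sum>j<Suc n. t (Suc n + j)) = (\<Sum>j\<le>n. t (n - j) + t (Suc n + j))"
      by (simp only: lessThan_Suc_atMost sum.distrib)
    also have "\<dots> = (\<Sum>j\<le>n. q ^ E * (q ^ tri (Suc j) * (qbin q (2*n+1) (n - j) + qbin q (2*n+1) (Suc n + j))))"
    proof (rule sum.cong[OF refl])
      fix j assume "j \<in> {..n}"
      then have j: "j \<le> n" by simp
      show "t (n - j) + t (Suc n + j) = q ^ E * (q ^ tri (Suc j) * (qbin q (2*n+1) (n - j) + qbin q (2*n+1) (Suc n + j)))"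
        unfolding t1[OF j] t2[OF j] by (simp only: distrib_left)
    qed
    finally show ?thesis by (simp only: sum_distrib_left)
  qed
  finally have rhs: "(\<Sum>k\<le>2*n+1. t k) = q ^ E * (\<Sum>j\<le>n. q ^ tri (Suc j) * (qbin q (2*n+1) (n - j) + qbin q (2*n+1) (Suc n + j)))" .
  have "q ^ E * (\<Sum>j\<le>n. q ^ tri (Suc j) * (qbin q (2*n+1) (n - j) + qbin q (2*n+1) (Suc n + j)))
      = q ^ E * (2 * Pm ^ 2)"
  proof -
    have ct: "(\<Sum>k\<le>2*n+1. t k) = (\<Prod>i<2*n+1. g i)"
      unfolding t_def using c[symmetric] .
    show ?thesis using trans[OF trans[OF rhs[symmetric] ct] lhs] .
  qed
  moreover have "q ^ E \<noteq> 0" using assms(2) by simp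
  ultimately show ?thesis unfolding Pm_def by (rule mult_left_cancel[THEN iffD1, rotated])
qed


definition qC :: "complex \<Rightarrow> real" where
  "qC q = exp (norm q / (1 - norm q)) / (cp0 q * cp0 q)"

lemma qbin_bound:
  assumes "norm q < 1"
  shows "norm (qbin q N m) \<le> qC q"
proof (cases "m \<le> N")
  case True
  have u: "norm (qpoch q q N) \<le> exp (norm q / (1 - norm q))"
    by (rule qpoch_upper) (use assms in auto)
  have l1: "cp0 q \<le> norm (qpoch q q m)" "cp0 q \<le> norm (qpoch q q (N - m))"
    using cp0_le[OF assms] by auto
  have c0: "0 < cp0 q" by (rule cp0_pos)
  have "cp0 q * cp0 q \<le> norm (qpoch q q m) * norm (qpoch q q (N - m))"
    using l1 c0 by (intro mult_mono) auto
  then have "norm (qpoch q q N) / (norm (qpoch q q m) * norm (qpoch q q (N - m)))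
      \<le> exp (norm q / (1 - norm q)) / (cp0 q * cp0 q)"
    using u c0 by (intro frac_le) auto
  then show ?thesis using True by (simp add: qbin_def qC_def norm_mult norm_divide)
next
  case False
  have "0 \<le> qC q" using cp0_pos[of q] by (simp add: qC_def)
  then show ?thesis using False by simp
qed

lemma tri_Suc_ge: "k \<le> tri (Suc k)" by (simp add: tri_Suc)

lemma summable_tri:
  assumes "norm q < 1"
  shows "summable (\<lambda>k. norm q ^ tri (Suc k))"
proof (rule summable_comparison_test)
  show "\<exists>N. \<forall>n\<ge>N. norm (norm q ^ tri (Suc n)) \<le> norm q ^ n"
    using assms by (auto intro!: power_decreasing tri_Suc_ge)
  show "summable (\<lambda>n. norm q ^ n)" using assms by (intro summable_geometric) auto
qed


lemma gauss_identity_aux: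
  assumes "norm q < 1" "q \<noteq> 0"
  shows "(\<lambda>k. q ^ tri (Suc k)) sums (qpoch_inf q q * qpoch_inf (-q) q ^ 2)"
proof -
  define Q where "Q = qpoch q q"
  define Qi where "Qi = qpoch_inf q q"
  have Qlim: "Q \<longlonglongrightarrow> Qi" unfolding Q_def Qi_def by (rule qpoch_tendsto) (use assms in auto)
  have Qi0: "Qi \<noteq> 0" unfolding Qi_def by (rule qpoch_inf_nz) (use assms in auto)
  define a where "a k n = (if k \<le> n then q ^ tri (Suc k) * (qbin q (2*n+1) (n - k) + qbin q (2*n+1) (Suc n + k)) else 0)" for k n
  define b where "b k = q ^ tri (Suc k) * (2 / Qi)" for k
  have lim: "(\<lambda>n. a k n) \<longlonglongrightarrow> b k" for k
  proof -
    define R where "R n = Q (2*n+1) / (Q (n - k) * Q (Suc n + k))" for n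
    have ev: "\<forall>\<^sub>F n in sequentially. q ^ tri (Suc k) * (2 * R n) = a k n"
    proof (rule eventually_sequentiallyI[of k])
      fix n assume kn: "k \<le> n"
      have e: "2*n+1 - (n - k) = Suc n + k" "2*n+1 - (Suc n + k) = n - k" using kn by auto
      have "qbin q (2*n+1) (n - k) = R n" "qbin q (2*n+1) (Suc n + k) = R n"
        using kn by (simp_all add: qbin_def R_def Q_def e ac_simps)
      then show "q ^ tri (Suc k) * (2 * R n) = a k n" using kn by (simp add: a_def)
    qed
    have l1: "(\<lambda>n. Q (2*n+1)) \<longlonglongrightarrow> Qi"
    proof -
      have "strict_mono (\<lambda>n::nat. 2*n+1)" by (simp add: strict_mono_Suc_iff)
      from LIMSEQ_subseq_LIMSEQ[OF Qlim this] show ?thesis by (simp add: o_def)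
    qed
    have l2: "(\<lambda>n. Q (Suc n + k)) \<longlonglongrightarrow> Qi"
      using LIMSEQ_ignore_initial_segment[OF Qlim, of "Suc k"] by (simp add: add.commute)
    have l3: "(\<lambda>n. Q (n - k)) \<longlonglongrightarrow> Qi"
      by (rule LIMSEQ_offset[where k = k]) (simp add: Qlim)
    have "(\<lambda>n. R n) \<longlonglongrightarrow> Qi / (Qi * Qi)"
      unfolding R_def using Qi0 by (intro tendsto_intros l1 l2 l3) simp
    then have "(\<lambda>n. q ^ tri (Suc k) * (2 * R n)) \<longlonglongrightarrow> q ^ tri (Suc k) * (2 * (Qi / (Qi * Qi)))"
      by (intro tendsto_intros)
    moreover have "q ^ tri (Suc k) * (2 * (Qi / (Qi * Qi))) = b k" using Qi0 by (simp add: b_def)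
    ultimately show ?thesis using Lim_transform_eventually[OF _ ev] by simp
  qed
  define M where "M k = norm q ^ tri (Suc k) * (2 * qC q)" for k
  have bound: "norm (a k n) \<le> M k" for k n
  proof (cases "k \<le> n")
    case True
    have "norm (qbin q (2*n+1) (n - k) + qbin q (2*n+1) (Suc n + k)) \<le> 2 * qC q"
      using qbin_bound[OF assms(1), of "2*n+1" "n-k"] qbin_bound[OF assms(1), of "2*n+1" "Suc n + k"]
        norm_triangle_ineq[of "qbin q (2*n+1) (n - k)" "qbin q (2*n+1) (Suc n + k)"] by linarith
    then show ?thesis using True unfolding a_def M_def
      by (simp add: norm_mult norm_power mult_left_mono)
  next
    case False
    have "0 \<le> qC q" using cp0_pos[of q] by (simp add: qC_def)
    then show ?thesis using False by (simp add: a_def M_def)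
  qed
  have sM: "summable M" unfolding M_def by (intro summable_mult2 summable_tri assms)
  have T: "((\<lambda>n. suminf (\<lambda>k. a k n)) \<longlongrightarrow> suminf b) sequentially"
  proof -
    have ev: "eventually (\<lambda>(k,n). norm (a k n) \<le> M k) (at_top \<times>\<^sub>F sequentially)"
      by (rule always_eventually) (simp add: bound split_beta)
    show ?thesis
      using tannerys_theorem[where a = a and b = b and M = M and F = sequentially, OF lim ev sM trivial_limit_sequentially]
      by (elim conjE)
  qed
  have fin: "suminf (\<lambda>k. a k n) = 2 * qpoch (-q) q n ^ 2" for n
  proof -
    have "suminf (\<lambda>k. a k n) = (\<Sum>k\<le>n. a k n)"
      by (rule suminf_finite) (simp_all add: a_def)
    also have "\<dots> = (\<Sum>j\<le>n. q ^ tri (Suc j) * (qbin q (2*n+1) (n - j) + qbin q (2*n+1) (Suc n + j)))"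
      by (rule sum.cong[OF refl]) (simp add: a_def)
    also have "\<dots> = 2 * qpoch (-q) q n ^ 2" by (rule gauss_finite[OF assms])
    finally show ?thesis .
  qed
  have T2: "(\<lambda>n. 2 * qpoch (-q) q n ^ 2) \<longlonglongrightarrow> 2 * qpoch_inf (-q) q ^ 2"
    using assms by (intro tendsto_intros qpoch_tendsto) auto
  have sb: "suminf b = 2 * qpoch_inf (-q) q ^ 2"
    using LIMSEQ_unique[OF T[unfolded fin] T2] .
  have sS: "summable (\<lambda>k. q ^ tri (Suc k))"
  proof (rule summable_norm_cancel)
    show "summable (\<lambda>k. norm (q ^ tri (Suc k)))"
      using summable_tri[OF assms(1)] by (simp add: norm_power)
  qed
  have "suminf b = suminf (\<lambda>k. q ^ tri (Suc k)) * (2 / Qi)"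
    unfolding b_def by (rule suminf_mult2[symmetric, OF sS])
  then have "suminf (\<lambda>k. q ^ tri (Suc k)) * (2 / Qi) = 2 * qpoch_inf (-q) q ^ 2"
    using sb by simp
  then have S1: "suminf (\<lambda>k. q ^ tri (Suc k)) = Qi * qpoch_inf (-q) q ^ 2"
    using Qi0 by (simp add: divide_simps)
  have "(\<lambda>k. q ^ tri (Suc k)) sums suminf (\<lambda>k. q ^ tri (Suc k))" by (rule summable_sums[OF sS])
  then show ?thesis unfolding S1 Qi_def .
qed


lemma qpoch_pm: "qpoch q q n * qpoch (-q) q n = qpoch (q^2) (q^2) n"
  unfolding qpoch_def prod.distrib[symmetric]
  by (rule prod.cong) (simp_all add: algebra_simps power2_eq_square power_mult_distrib)

lemma qpoch_even_odd: "qpoch q q (2*n) = qpoch q (q^2) n * qpoch (q^2) (q^2) n"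
proof (induction n)
  case 0 then show ?case by simp
next
  case (Suc n)
  have e: "2 * Suc n = Suc (Suc (2*n))" by simp
  have a: "q * q ^ (2*n) = q * (q^2)^n" by (simp add: power_mult)
  have b: "q * q ^ Suc (2*n) = q^2 * (q^2)^n" by (simp add: power_mult power2_eq_square)
  show ?case unfolding e qpoch_Suc Suc.IH a b by (simp add: algebra_simps)
qed

lemma tri_Suc_closed: "tri (Suc n) = n * (n + 1) div 2"
proof -
  have "2 * tri (Suc n) + Suc n = Suc n * Suc n" by (rule tri_2)
  then have "2 * tri (Suc n) = n * (n + 1)" by simp
  then show ?thesis by simp
qed

theorem corollary4p2:
  fixes q :: complex
  assumes "0 < norm q" and "norm q < 1"
  shows "convergent (alpha q)
    \<and> lim (alpha q) / q = qpoch_inf (q^2) (q^2) / qpoch_inf q (q^2)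
    \<and> (\<lambda>n. q ^ (n * (n + 1) div 2)) sums (qpoch_inf (q^2) (q^2) / qpoch_inf q (q^2))"
proof -
  have q0: "q \<noteq> 0" using assms(1) by auto
  have q1: "norm q < 1" by (rule assms(2))
  have q2: "norm (q^2) < 1" using q1 by (simp add: norm_power power_less_one_iff)
  have nq: "norm (-q) < 1" using q1 by simp
  define P2 where "P2 = qpoch_inf (q^2) (q^2)"
  define Qo where "Qo = qpoch_inf q (q^2)"
  define Qi where "Qi = qpoch_inf q q"
  define Pn where "Pn = qpoch_inf (-q) q"
  have P2nz: "P2 \<noteq> 0" unfolding P2_def by (rule qpoch_inf_nz[OF q2 q2])
  have Qonz: "Qo \<noteq> 0" unfolding Qo_def by (rule qpoch_inf_nz[OF q1 q2])
  have E: "eul (q^2) q * Qo = 1" unfolding Qo_def by (rule euler_identity[OF q2 q1])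
  have AL: "alpha q \<longlonglongrightarrow> P2 * (q * eul (q^2) q)"
    unfolding P2_def by (rule alpha_tendsto[OF q1])
  have conv: "convergent (alpha q)" using AL by (auto simp: convergent_def)
  have limv: "lim (alpha q) = P2 * (q * eul (q^2) q)" using AL by (rule limI)
  have part2: "lim (alpha q) / q = P2 / Qo"
  proof -
    have "eul (q^2) q = 1 / Qo" using E Qonz by (simp add: field_simps)
    then show ?thesis using q0 limv by simp
  qed
  have r1: "Qi * Pn = P2"
  proof -
    have "(\<lambda>n. qpoch q q n * qpoch (-q) q n) \<longlonglongrightarrow> Qi * Pn"
      unfolding Qi_def Pn_def by (intro tendsto_mult qpoch_tendsto q1 nq)
    moreover have "(\<lambda>n. qpoch q q n * qpoch (-q) q n) \<longlonglongrightarrow> P2"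
      unfolding qpoch_pm P2_def by (rule qpoch_tendsto[OF q2 q2])
    ultimately show ?thesis using LIMSEQ_unique by blast
  qed
  have r2: "Qi = Qo * P2"
  proof -
    have "(\<lambda>n. qpoch q q (2*n)) \<longlonglongrightarrow> Qi"
    proof -
      have sm: "strict_mono (\<lambda>n::nat. 2*n)" by (simp add: strict_mono_Suc_iff)
      have "(\<lambda>n. qpoch q q n) \<longlonglongrightarrow> Qi" unfolding Qi_def by (rule qpoch_tendsto[OF q1 q1])
      from LIMSEQ_subseq_LIMSEQ[OF this sm] show ?thesis by (simp add: o_def)
    qed
    moreover have "(\<lambda>n. qpoch q q (2*n)) \<longlonglongrightarrow> Qo * P2"
      unfolding qpoch_even_odd Qo_def P2_def
      by (intro tendsto_mult qpoch_tendsto q1 q2)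
    ultimately show ?thesis using LIMSEQ_unique by blast
  qed
  have r3: "Qo * Pn = 1"
  proof -
    have "P2 * (Qo * Pn) = P2 * 1" using r1 r2 by (simp add: algebra_simps)
    then show ?thesis using P2nz by simp
  qed
  have G: "(\<lambda>k. q ^ tri (Suc k)) sums (Qi * Pn ^ 2)"
    unfolding Qi_def Pn_def by (rule gauss_identity_aux[OF q1 q0])
  have "Qi * Pn ^ 2 = P2 / Qo"
  proof -
    have pn: "Pn = 1 / Qo" using r3 Qonz by (simp add: field_simps)
    have "Qi * Pn ^ 2 = (Qi * Pn) * Pn" by (simp add: power2_eq_square)
    also have "\<dots> = P2 * Pn" by (simp only: r1)
    also have "\<dots> = P2 / Qo" by (simp add: pn)
    finally show ?thesis .
  qed
  with G have part3: "(\<lambda>n. q ^ (n * (n + 1) div 2)) sums (P2 / Qo)"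
    by (simp add: tri_Suc_closed)
  show ?thesis using conv part2 part3 unfolding P2_def Qo_def by blast
qed

end
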